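(* For all integers $d\geq 1$ and $L\geq 1$, the VC dimension of the class $\mathrm{GNN}_{\mathrm{anp}}(d,L)$ over the set $\mathcal{G}$ of all finite graphs is unbounded, that is, $\mathrm{VCdim}_{\mathcal{G}}(\mathrm{GNN}_{\mathrm{anp}}(d,L))=\infty$; this holds even when restricted to architectures having only a single (real) parameter.
   Context: $\mathcal{G}$ is the set of finite, undirected, simple graphs $G=(V(G),E(G),\ell)$ with vertex labels $\ell:V(G)\to\mathbb{N}$, of arbitrary order; $N_G(v)$ denotes the neighbourhood of $v$. A graph neural network (GNN) of depth $L$ assigns to each vertex an initial vector $\mathbf{h}^{(0)}_v\in\mathbb{R}^{d^{(0)}}$ depending only on the label $\ell(v)$, and for $t=1,\dots,L$ computes $\mathbf{h}^{(t)}_v = \mathsf{upd}^{(t)}\big(\mathbf{h}^{(t-1)}_v, \mathsf{agg}^{(t)}(\{\!\{\mathbf{h}^{(t-1)}_u : u\in N_G(v)\}\!\})\big)\in\mathbb{R}^{d^{(t)}}$, and outputs $\xi(G)=\mathsf{readout}(\{\!\{\mathbf{h}^{(L)}_v : v\in V(G)\}\!\})\in\mathbb{R}$, where $\{\!\{\cdot\}\!\}$ denotes a multiset and $\mathsf{upd}^{(t)},\mathsf{agg}^{(t)},\mathsf{readout}$ are parameterized functions with real (arbitrary precision) parameters. The width is $\max_t d^{(t)}$. $\mathrm{GNN}(d,L)$ is the class of GNNs of depth $L$ and width at most $d$. $\mathrm{GNN}_{\mathrm{anp}}(d,L)\subseteq\mathrm{GNN}(d,L)$ is the subclass in which every aggregation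 function is the sum of the neighbours' embeddings and the update and readout functions are single-layer perceptrons (an affine map followed by an activation function) using analytic non-polynomial activation functions. VC dimension: $\mathrm{VCdim}_{\mathcal{X}}(\mathcal{C})$ is the maximal $m$ such that there exist graphs $G_1,\dots,G_m\in\mathcal{X}$ and a fixed threshold $t\in\mathbb{R}$ such that for every $\mathbf{x}\in\{0,1\}^m$ there is a GNN in $\mathcal{C}$ whose output $\xi_{\mathbf{x}}$ satisfies $\xi_{\mathbf{x}}(G_i)\geq t$ if and only if $x_i=1$, for all $i\in[m]$; it is $\infty$ if no such maximum exists. *)

theory Defs
  imports Complex_Main "HOL-Computational_Algebra.Polynomial" "HOL-Library.Extended_Nat"
begin

record lgraph =
  verts :: "nat set"
  adj   :: "nat \<Rightarrow> nat \<Rightarrow> bool"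
  lab   :: "nat \<Rightarrow> nat"

definition wf_graph :: "lgraph \<Rightarrow> bool" where
  "wf_graph G \<longleftrightarrow> finite (verts G)
     \<and> (\<forall>u v. adj G u v \<longrightarrow> u \<in> verts G \<and> v \<in> verts G)
     \<and> (\<forall>u v. adj G u v \<longrightarrow> adj G v u)
     \<and> (\<forall>v. \<not> adj G v v)"

definition all_graphs :: "lgraph set" where
  "all_graphs = {G. wf_graph G}"

definition nbrs :: "lgraph \<Rightarrow> nat \<Rightarrow> nat set" where
  "nbrs G v = {u \<in> verts G. adj G v u}"

text \<open>PW t i j, PU t i j, PB t i: weight on own embedding, weight on summed neighbour
  embeddings and bias of layer t; PRW i, PRB: readout weights and bias.\<close>
datatype param_idx = PW nat nat nat | PU nat nat nat | PB nat nat | PRW nat | PRB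

record gnn =
  dims  :: "nat \<Rightarrow> nat"
  init  :: "nat \<Rightarrow> nat \<Rightarrow> real"         \<comment> \<open>label \<Rightarrow> initial embedding (component i)\<close>
  act   :: "nat \<Rightarrow> real \<Rightarrow> real"        \<comment> \<open>activation of layer t (t = L+1: readout)\<close>
  param :: "param_idx \<Rightarrow> real"

fun emb :: "gnn \<Rightarrow> lgraph \<Rightarrow> nat \<Rightarrow> nat \<Rightarrow> nat \<Rightarrow> real" where
  "emb N G 0 v = (\<lambda>i. if i < dims N 0 then init N (lab G v) i else 0)"
| "emb N G (Suc t) v = (\<lambda>i. if i < dims N (Suc t) then
      act N (Suc t)
        ((\<Sum>j<dims N t. param N (PW (Suc t) i j) * emb N G t v j)
         + (\<Sum>j<dims N t. param N (PU (Suc t) i j) * (\<Sum>u\<in>nbrs G v. emb N G t u j))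
         + param N (PB (Suc t) i))
    else 0)"

definition gnn_out :: "nat \<Rightarrow> gnn \<Rightarrow> lgraph \<Rightarrow> real" where
  "gnn_out L N G = act N (Suc L)
     ((\<Sum>i<dims N L. param N (PRW i) * (\<Sum>v\<in>verts G. emb N G L v i)) + param N PRB)"

definition real_analytic :: "(real \<Rightarrow> real) \<Rightarrow> bool" where
  "real_analytic f \<longleftrightarrow> (\<forall>x. \<exists>r>0. \<exists>c::nat \<Rightarrow> real.
      \<forall>y. \<bar>y - x\<bar> < r \<longrightarrow> (\<lambda>n. c n * (y - x) ^ n) sums f y)"

definition is_polynomial_fun :: "(real \<Rightarrow> real) \<Rightarrow> bool" where
  "is_polynomial_fun f \<longleftrightarrow> (\<exists>p :: real poly. \<forall>x. f x = poly p x)"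

definition anp :: "nat \<Rightarrow> nat \<Rightarrow> gnn \<Rightarrow> bool" where
  "anp d L N \<longleftrightarrow> (\<forall>t\<le>L. dims N t \<le> d)
     \<and> (\<forall>t\<in>{1..Suc L}. real_analytic (act N t) \<and> \<not> is_polynomial_fun (act N t))"

definition GNN_anp :: "nat \<Rightarrow> nat \<Rightarrow> (lgraph \<Rightarrow> real) set" where
  "GNN_anp d L = {gnn_out L N | N. anp d L N}"

definition shatters_m :: "'a set \<Rightarrow> ('a \<Rightarrow> real) set \<Rightarrow> nat \<Rightarrow> bool" where
  "shatters_m X C m \<longleftrightarrow> (\<exists>Gs :: nat \<Rightarrow> 'a. \<exists>t::real. (\<forall>i<m. Gs i \<in> X) \<and>
      (\<forall>x :: nat \<Rightarrow> bool. \<exists>\<xi>\<in>C. \<forall>i<m. (\<xi> (Gs i) \<ge> t \<longleftrightarrow> x i)))"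

definition VCdim :: "'a set \<Rightarrow> ('a \<Rightarrow> real) set \<Rightarrow> enat" where
  "VCdim X C = (if finite {m. shatters_m X C m} then enat (Max {m. shatters_m X C m}) else \<infinity>)"

definition one_param_family :: "nat \<Rightarrow> gnn \<Rightarrow> param_idx \<Rightarrow> (lgraph \<Rightarrow> real) set" where
  "one_param_family L N p = {gnn_out L (N\<lparr>param := (param N)(p := w)\<rparr>) | w. True}"

end

theory Submission
  imports Defs
begin

lemma sin_add_2pin: "sin (x + 2 * pi * real (n::nat)) = sin x"
proof (induction n arbitrary: x)
  case 0 then show ?case by simp
next
  case (Suc n)
  have "x + 2 * pi * real (Suc n) = (x + 2 * pi * real n) + 2 * pi" by (simp add: algebra_simps)
  then have "sin (x + 2 * pi * real (Suc n)) = sin ((x + 2 * pi * real n) + 2 * pi)" by (simp only:)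
  also have "\<dots> = sin x" using Suc by (simp only: sin_periodic)
  finally show ?case .
qed

lemma sin_analytic: "real_analytic sin"
  unfolding real_analytic_def
proof
  fix x :: real
  show "\<exists>r>0. \<exists>c::nat \<Rightarrow> real. \<forall>y. \<bar>y - x\<bar> < r \<longrightarrow> (\<lambda>n. c n * (y - x) ^ n) sums sin y"
  proof (intro exI conjI allI impI)
    show "(0::real) < 1" by simp
    fix y :: real
    have a: "(\<lambda>n. sin x * (cos_coeff n * (y-x)^n)) sums (sin x * cos (y - x))"
      using sums_mult[OF cos_converges[of "y-x"]] by simp
    have b: "(\<lambda>n. cos x * (sin_coeff n * (y-x)^n)) sums (cos x * sin (y - x))"
      using sums_mult[OF sin_converges[of "y-x"]] by simp
    have "(\<lambda>n. sin x * (cos_coeff n * (y-x)^n) + cos x * (sin_coeff n * (y-x)^n))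
        sums (sin x * cos (y - x) + cos x * sin (y - x))"
      using sums_add[OF a b] .
    moreover have "sin x * cos (y - x) + cos x * sin (y - x) = sin y"
      using sin_add[of x "y - x"] by simp
    ultimately show "(\<lambda>n. (sin x * cos_coeff n + cos x * sin_coeff n) * (y - x) ^ n) sums sin y"
      by (simp add: algebra_simps)
  qed
qed

lemma sin_not_poly: "\<not> is_polynomial_fun sin"
proof
  assume "is_polynomial_fun sin"
  then obtain p :: "real poly" where p: "\<And>x. sin x = poly p x"
    unfolding is_polynomial_fun_def by blast
  show False
  proof (cases "p = 0")
    case True
    then show False using p[of "pi/2"] by simp
  next
    case False
    then have fin: "finite {x. poly p x = 0}" by (rule poly_roots_finite)
    have "range (\<lambda>n::nat. real n * pi) \<subseteq> {x. poly p x = 0}"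
      using p by (auto simp flip: p)
    moreover have "infinite (range (\<lambda>n::nat. real n * pi))"
      by (rule range_inj_infinite) (auto simp: inj_def)
    ultimately show False using fin finite_subset by blast
  qed
qed

definition N0 :: gnn where
  "N0 = \<lparr>dims = (\<lambda>_. 1), init = (\<lambda>_ _. 1), act = (\<lambda>_. sin),
         param = (\<lambda>p. case p of PB _ _ \<Rightarrow> pi/2 | _ \<Rightarrow> 0)\<rparr>"

abbreviation Nw :: "real \<Rightarrow> gnn" where
  "Nw w \<equiv> N0\<lparr>param := (param N0)(PRW 0 := w)\<rparr>"

lemma emb_Nw: "emb (Nw w) G t v = (\<lambda>i. if i < 1 then 1 else 0)"
  by (induction t arbitrary: v) (auto simp: N0_def)

lemma out_Nw: "gnn_out L (Nw w) G = sin (w * real (card (verts G)))"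
proof -
  have "gnn_out L (Nw w) G = act (Nw w) (Suc L)
     ((\<Sum>i<dims (Nw w) L. param (Nw w) (PRW i) * (\<Sum>v\<in>verts G. emb (Nw w) G L v i)) + param (Nw w) PRB)"
    by (simp only: gnn_out_def)
  also have "\<dots> = sin (w * real (card (verts G)))"
    unfolding emb_Nw by (simp add: N0_def)
  finally show ?thesis .
qed

lemma dims_Nw: "dims (Nw w) = (\<lambda>_. 1)" by (simp add: N0_def)
lemma act_Nw: "act (Nw w) = (\<lambda>_. sin)" by (simp add: N0_def)

lemma anp_Nw: "d \<ge> 1 \<Longrightarrow> anp d L (Nw w)"
  unfolding anp_def dims_Nw act_Nw using sin_analytic sin_not_poly by blast

definition Gr :: "nat \<Rightarrow> lgraph" where
  "Gr n = \<lparr>verts = {..<n}, adj = (\<lambda>_ _. False), lab = (\<lambda>_. 0)\<rparr>"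

lemma Gr_wf: "Gr n \<in> all_graphs"
  by (simp add: all_graphs_def wf_graph_def Gr_def)

lemma card_Gr: "card (verts (Gr n)) = n"
  by (simp add: Gr_def)

lemma sin_shatter:
  "\<forall>x::nat \<Rightarrow> bool. \<exists>K::nat. K < 2^m \<and>
     (\<forall>i<m. (0 \<le> sin (pi * (2 * real K + 1) / 2^m * 2^i) \<longleftrightarrow> x i))"
proof (induction m)
  case 0 then show ?case by auto
next
  case (Suc m)
  show ?case
  proof
    fix x :: "nat \<Rightarrow> bool"
    obtain K where K: "K < 2^m"
      and H: "\<And>i. i < m \<Longrightarrow> (0 \<le> sin (pi * (2 * real K + 1) / 2^m * 2^i) \<longleftrightarrow> x (Suc i))"
      using Suc.IH[rule_format, of "\<lambda>i. x (Suc i)"] by blast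
    define b :: nat where "b = (if x 0 then 0 else 1)"
    define K' where "K' = K + b * 2^m"
    have b1: "b \<le> 1" by (simp add: b_def)
    have "K' < 2^Suc m"
    proof -
      have h: "b * 2^m \<le> (2::nat)^m" using b1 by simp
      have "K' < 2^m + 2^m" unfolding K'_def using K h by linarith
      then show ?thesis by simp
    qed
    moreover have "\<forall>i<Suc m. (0 \<le> sin (pi * (2 * real K' + 1) / 2^Suc m * 2^i) \<longleftrightarrow> x i)"
    proof (intro allI impI)
      fix i assume i: "i < Suc m"
      define a where "a = pi * (2 * real K + 1) / 2^Suc m"
      have e: "pi * (2 * real K' + 1) / 2^Suc m = a + pi * real b"
        by (simp add: K'_def a_def field_simps)
      show "(0 \<le> sin (pi * (2 * real K' + 1) / 2^Suc m * 2^i) \<longleftrightarrow> x i)"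
      proof (cases i)
        case 0
        have "real K + 1 \<le> 2^m" using K
          by (metis of_nat_Suc of_nat_le_iff of_nat_numeral of_nat_power Suc_leI add.commute)
        then have "2 * real K + 1 < 2^Suc m" by simp
        then have "pi * (2 * real K + 1) < pi * 2^Suc m"
          by (intro mult_strict_left_mono) simp_all
        then have "a < pi" unfolding a_def by (simp add: pos_divide_less_eq)
        moreover have "0 < a" unfolding a_def by simp
        ultimately have pos: "0 < sin a" by (intro sin_gt_zero)
        have e0: "pi * (2 * real K' + 1) / 2^Suc m * 2^i = a + pi * real b"
          using e 0 by (simp only: power_0 mult_1_right)
        show ?thesis unfolding e0 using 0 pos
          by (cases "x 0") (auto simp: b_def)
      next
        case (Suc j)
        then have j: "j < m" using i by simp
        have eq: "pi * (2 * real K' + 1) / 2^Suc m * 2^i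
            = pi * (2 * real K + 1) / 2^m * 2^j + 2 * pi * real (b * 2^j)"
          by (simp add: K'_def a_def Suc field_simps)
        have "sin (pi * (2 * real K' + 1) / 2^Suc m * 2^i) = sin (pi * (2 * real K + 1) / 2^m * 2^j)"
          unfolding eq by (rule sin_add_2pin)
        then show ?thesis using H[OF j] Suc by simp
      qed
    qed
    ultimately show "\<exists>K::nat. K < 2^Suc m \<and>
       (\<forall>i<Suc m. (0 \<le> sin (pi * (2 * real K + 1) / 2^Suc m * 2^i) \<longleftrightarrow> x i))" by blast
  qed
qed

lemma shatters_fam: "shatters_m all_graphs (one_param_family L N0 (PRW 0)) m"
proof -
  have 1: "\<forall>i<m. Gr (2^i) \<in> all_graphs" using Gr_wf by blast
  have 2: "\<forall>x::nat\<Rightarrow>bool. \<exists>\<xi>\<in>one_param_family L N0 (PRW 0). \<forall>i<m. (\<xi> (Gr (2^i)) \<ge> 0 \<longleftrightarrow> x i)"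
  proof
    fix x :: "nat \<Rightarrow> bool"
    obtain K :: nat where K: "\<forall>i<m. (0 \<le> sin (pi * (2 * real K + 1) / 2^m * 2^i) \<longleftrightarrow> x i)"
      using sin_shatter[of m] by blast
    define w where "w = pi * (2 * real K + 1) / 2^m"
    have e: "\<And>i. gnn_out L (Nw w) (Gr (2^i)) = sin (w * 2^i)"
      by (simp add: out_Nw card_Gr)
    have "gnn_out L (Nw w) \<in> one_param_family L N0 (PRW 0)"
      unfolding one_param_family_def by blast
    moreover have "\<forall>i<m. (gnn_out L (Nw w) (Gr (2^i)) \<ge> 0 \<longleftrightarrow> x i)"
      unfolding e using K by (simp only: w_def)
    ultimately show "\<exists>\<xi>\<in>one_param_family L N0 (PRW 0). \<forall>i<m. (\<xi> (Gr (2^i)) \<ge> 0 \<longleftrightarrow> x i)"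
      by blast
  qed
  show ?thesis unfolding shatters_m_def
    by (rule exI[of _ "\<lambda>i. Gr (2^i)"], rule exI[of _ "0::real"], rule conjI[OF 1 2])
qed

lemma VC_inf: assumes "\<And>m. shatters_m X C m" shows "VCdim X C = \<infinity>"
proof -
  have "{m. shatters_m X C m} = UNIV" using assms by blast
  then have "infinite {m. shatters_m X C m}" by (simp only: infinite_UNIV_nat not_False_eq_True)
  then show ?thesis unfolding VCdim_def by (rule if_not_P)
qed

lemma shatters_mono:
  assumes CD: "C \<subseteq> D" and S: "shatters_m X C m"
  shows "shatters_m X D m"
proof -
  obtain Gs t where g: "\<forall>i<m. Gs i \<in> X"
    and h: "\<forall>x :: nat \<Rightarrow> bool. \<exists>\<xi>\<in>C. \<forall>i<m. (\<xi> (Gs i) \<ge> t \<longleftrightarrow> x i)"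
    using S unfolding shatters_m_def by (elim exE conjE)
  have h2: "\<forall>x :: nat \<Rightarrow> bool. \<exists>\<xi>\<in>D. \<forall>i<m. (\<xi> (Gs i) \<ge> t \<longleftrightarrow> x i)"
  proof
    fix x :: "nat \<Rightarrow> bool"
    obtain \<xi> where xC: "\<xi> \<in> C" and P: "\<forall>i<m. (\<xi> (Gs i) \<ge> t \<longleftrightarrow> x i)"
      using h by (elim allE[of _ x] bexE)
    have "\<xi> \<in> D" using CD xC by (rule subsetD)
    then show "\<exists>\<xi>\<in>D. \<forall>i<m. (\<xi> (Gs i) \<ge> t \<longleftrightarrow> x i)" using P by blast
  qed
  show ?thesis unfolding shatters_m_def
    by (rule exI[of _ Gs], rule exI[of _ t], rule conjI[OF g h2])
qed

theorem theorem5: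
  fixes d L :: nat
  assumes "d \<ge> 1" and "L \<ge> 1"
  shows "VCdim all_graphs (GNN_anp d L) = \<infinity>
    \<and> (\<exists>N p. (\<forall>w. anp d L (N\<lparr>param := (param N)(p := w)\<rparr>))
              \<and> VCdim all_graphs (one_param_family L N p) = \<infinity>)"
proof -
  have sub: "one_param_family L N0 (PRW 0) \<subseteq> GNN_anp d L"
  proof
    fix f assume "f \<in> one_param_family L N0 (PRW 0)"
    then obtain w where "f = gnn_out L (Nw w)" unfolding one_param_family_def by blast
    then show "f \<in> GNN_anp d L" unfolding GNN_anp_def using anp_Nw[OF assms(1)] by blast
  qed
  have "VCdim all_graphs (GNN_anp d L) = \<infinity>"
    by (rule VC_inf, rule shatters_mono[OF sub shatters_fam])
  moreover have "VCdim all_graphs (one_param_family L N0 (PRW 0)) = \<infinity>"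
    by (rule VC_inf, rule shatters_fam)
  ultimately show ?thesis using anp_Nw[OF assms(1)] by (intro conjI exI[of _ N0] exI[of _ "PRW 0"]) auto
qed

end
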